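(* Let $G$ be an index coding problem and let $G'$ be the problem obtained from $G$ by deleting all edges $i\to j$ (i.e., removing $i$ from $A_j$) that do not lie on any directed cycle of the side information graph. Then $G$ and $G'$ have the same capacity region.
   Context: Index coding: an instance with $n$ messages is specified by side information sets $A_1,\ldots,A_n$ with $A_j\subseteq[1:n]\setminus\{j\}$, equivalently a directed side information graph on $[1:n]$ with an edge $i\to j$ iff $i\in A_j$. A $(t_1,\ldots,t_n,r)$ index code (with $t_j$ nonnegative integers, $r$ a positive integer) consists of an encoder $\phi:\prod_i\{0,1\}^{t_i}\to\{0,1\}^r$ and decoders $\psi_j:\{0,1\}^r\times\prod_{k\in A_j}\{0,1\}^{t_k}\to\{0,1\}^{t_j}$ with $\psi_j(\phi(x^n),(x_k)_{k\in A_j})=x_j$ for all message tuples $x^n$ and all $j$. A nonnegative rate tuple is achievable if $R_j\le t_j/r$ for all $j$ for some such code; the capacity region is the closure of the set of achievable rate tuples. *)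

theory Defs
  imports "HOL-Analysis.Analysis"
begin

text \<open>Messages are indexed by a finite type 'n (so n = CARD('n)).
  A message tuple is x :: 'n => bool list with length (x i) = t i, i.e. x i in {0,1}^(t i).\<close>

definition well_formed_ic :: "('n::finite \<Rightarrow> 'n set) \<Rightarrow> bool" where
  "well_formed_ic A \<longleftrightarrow> (\<forall>j. j \<notin> A j)"

definition msg_tuples :: "('n::finite \<Rightarrow> nat) \<Rightarrow> ('n \<Rightarrow> bool list) set" where
  "msg_tuples t = {x. \<forall>i. length (x i) = t i}"

text \<open>A (t_1,...,t_n,r) index code: encoder phi into {0,1}^r, decoders psi j which
  see the codeword and the side information (x_k)_{k in A j}.\<close>
definition is_index_code ::
  "('n::finite \<Rightarrow> 'n set) \<Rightarrow> ('n \<Rightarrow> nat) \<Rightarrow> nat \<Rightarrow>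
   (('n \<Rightarrow> bool list) \<Rightarrow> bool list) \<Rightarrow>
   ('n \<Rightarrow> bool list \<Rightarrow> ('n \<Rightarrow> bool list) \<Rightarrow> bool list) \<Rightarrow> bool" where
  "is_index_code A t r \<phi> \<psi> \<longleftrightarrow>
     (\<forall>x\<in>msg_tuples t. length (\<phi> x) = r) \<and>
     (\<forall>x\<in>msg_tuples t. \<forall>j. \<psi> j (\<phi> x) (restrict x (A j)) = x j)"

definition index_code_exists :: "('n::finite \<Rightarrow> 'n set) \<Rightarrow> ('n \<Rightarrow> nat) \<Rightarrow> nat \<Rightarrow> bool" where
  "index_code_exists A t r \<longleftrightarrow> (\<exists>\<phi> \<psi>. is_index_code A t r \<phi> \<psi>)"

definition achievable :: "('n::finite \<Rightarrow> 'n set) \<Rightarrow> (real ^ 'n) \<Rightarrow> bool" where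
  "achievable A R \<longleftrightarrow> (\<forall>j. 0 \<le> R $ j) \<and>
     (\<exists>t r. 0 < r \<and> index_code_exists A t r \<and> (\<forall>j. R $ j \<le> real (t j) / real r))"

definition capacity_region :: "('n::finite \<Rightarrow> 'n set) \<Rightarrow> (real ^ 'n) set" where
  "capacity_region A = closure {R. achievable A R}"

definition side_graph :: "('n \<Rightarrow> 'n set) \<Rightarrow> ('n \<times> 'n) set" where
  "side_graph A = {(i, j). i \<in> A j}"

definition edge_on_cycle :: "('n \<Rightarrow> 'n set) \<Rightarrow> 'n \<Rightarrow> 'n \<Rightarrow> bool" where
  "edge_on_cycle A i j \<longleftrightarrow> (i, j) \<in> side_graph A \<and> (j, i) \<in> (side_graph A)\<^sup>*"

definition prune_acyclic_edges :: "('n \<Rightarrow> 'n set) \<Rightarrow> 'n \<Rightarrow> 'n set" where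
  "prune_acyclic_edges A j = {i. edge_on_cycle A i j}"

end

theory Submission
  imports Defs
begin


lemma bool_lists_eq: "{bs::bool list. length bs = n} = {xs. set xs \<subseteq> UNIV \<and> length xs = n}"
  by auto

lemma finite_bool_lists: "finite {bs::bool list. length bs = n}"
  unfolding bool_lists_eq by (rule finite_lists_length_eq) simp

lemma card_bool_lists: "card {bs::bool list. length bs = n} = 2 ^ n"
  unfolding bool_lists_eq by (subst card_lists_length_eq) simp_all

lemma msg_tuples_PiE: "msg_tuples t = PiE UNIV (\<lambda>i. {bs::bool list. length bs = t i})"
  unfolding msg_tuples_def by (auto simp: PiE_def extensional_def)

lemma finite_msg_tuples: "finite (msg_tuples (t::'n::finite \<Rightarrow> nat))"
  unfolding msg_tuples_PiE by (intro finite_PiE finite_bool_lists) simp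

definition good_col :: "('n::finite \<Rightarrow> 'n set) \<Rightarrow> ('n \<Rightarrow> nat) \<Rightarrow> (('n \<Rightarrow> bool list) \<Rightarrow> 'c) \<Rightarrow> bool" where
  "good_col A t c \<longleftrightarrow> (\<forall>x\<in>msg_tuples t. \<forall>y\<in>msg_tuples t. c x = c y \<longrightarrow>
      (\<forall>j. (\<forall>i\<in>A j. x i = y i) \<longrightarrow> x j = y j))"

lemma restrict_eq_iff: "restrict x S = restrict y S \<longleftrightarrow> (\<forall>i\<in>S. x i = y i)"
  by (metis restrict_apply' restrict_ext)

lemma code_good:
  assumes "is_index_code A t r \<phi> \<psi>"
  shows "good_col A t \<phi>" "card (\<phi> ` msg_tuples t) \<le> 2 ^ r"
proof -
  show "good_col A t \<phi>"
    unfolding good_col_def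
  proof (intro ballI impI allI)
    fix x y j assume x: "x \<in> msg_tuples t" and y: "y \<in> msg_tuples t" and e: "\<phi> x = \<phi> y"
      and ag: "\<forall>i\<in>A j. x i = y i"
    have "restrict x (A j) = restrict y (A j)" using ag restrict_eq_iff by blast
    then show "x j = y j" using assms x y e unfolding is_index_code_def by metis
  qed
  have "\<phi> ` msg_tuples t \<subseteq> {bs. length bs = r}" using assms unfolding is_index_code_def by auto
  then show "card (\<phi> ` msg_tuples t) \<le> 2 ^ r"
    using card_mono[OF finite_bool_lists] card_bool_lists by metis
qed

lemma col_code:
  fixes c :: "('n::finite \<Rightarrow> bool list) \<Rightarrow> 'c"
  assumes g: "good_col A t c" and cd: "card (c ` msg_tuples t) \<le> 2 ^ r"
  shows "index_code_exists A t r"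
proof -
  let ?M = "msg_tuples t"
  have fin: "finite (c ` ?M)" using finite_msg_tuples by blast
  have cle: "card (c ` ?M) \<le> card {bs::bool list. length bs = r}" using cd card_bool_lists by simp
  obtain e :: "'c \<Rightarrow> bool list" where e: "e ` (c ` ?M) \<subseteq> {bs. length bs = r}" "inj_on e (c ` ?M)"
    using card_le_inj[OF fin finite_bool_lists cle] by blast
  define \<phi> where "\<phi> = (\<lambda>x. e (c x))"
  define \<psi> where "\<psi> = (\<lambda>j w s. SOME v. \<exists>x\<in>?M. \<phi> x = w \<and> restrict x (A j) = s \<and> v = x j)"
  have "is_index_code A t r \<phi> \<psi>"
    unfolding is_index_code_def
  proof (intro conjI ballI allI)
    fix x assume x: "x \<in> ?M"
    show "length (\<phi> x) = r" using e x unfolding \<phi>_def by auto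
    fix j
    have ex: "\<exists>v. \<exists>x'\<in>?M. \<phi> x' = \<phi> x \<and> restrict x' (A j) = restrict x (A j) \<and> v = x' j"
      using x by blast
    have uniq: "v = x j" if "\<exists>x'\<in>?M. \<phi> x' = \<phi> x \<and> restrict x' (A j) = restrict x (A j) \<and> v = x' j" for v
    proof -
      from that obtain x' where x': "x' \<in> ?M" "\<phi> x' = \<phi> x" "restrict x' (A j) = restrict x (A j)" "v = x' j"
        by blast
      have "c x' = c x" using x' x e(2) unfolding \<phi>_def inj_on_def by blast
      moreover have "\<forall>i\<in>A j. x' i = x i" using x'(3) restrict_eq_iff by blast
      ultimately show ?thesis using g x x' unfolding good_col_def by metis
    qed
    show "\<psi> j (\<phi> x) (restrict x (A j)) = x j"
      unfolding \<psi>_def using someI_ex[OF ex] uniq by blast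
  qed
  then show ?thesis unfolding index_code_exists_def by blast
qed

lemma good_mono:
  assumes "good_col B t c" "\<forall>j. B j \<subseteq> A j"
  shows "good_col A t c"
  using assms unfolding good_col_def by blast

lemma achievable_mono:
  assumes "achievable B R" "\<forall>j. B j \<subseteq> A j"
  shows "achievable A R"
proof -
  obtain t r where tr: "0 < r" "index_code_exists B t r" "\<forall>j. R $ j \<le> real (t j) / real r"
    and nn: "\<forall>j. 0 \<le> R $ j"
    using assms(1) unfolding achievable_def by blast
  then obtain \<phi> \<psi> where cd: "is_index_code B t r \<phi> \<psi>" unfolding index_code_exists_def by blast
  have "good_col A t \<phi>" using good_mono[OF code_good(1)[OF cd] assms(2)] .
  then have "index_code_exists A t r" using col_code code_good(2)[OF cd] by blast
  then show ?thesis using tr nn unfolding achievable_def by blast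
qed

lemma cap_mono:
  assumes "\<forall>j. B j \<subseteq> A j"
  shows "capacity_region B \<subseteq> capacity_region A"
proof -
  have "{R. achievable B R} \<subseteq> {R. achievable A R}" using achievable_mono[OF _ assms] by blast
  then show ?thesis unfolding capacity_region_def by (rule closure_mono)
qed




lemma greedy_cover:
  fixes S :: "'i \<Rightarrow> 'x set" and p :: real
  assumes fI: "finite I" and Ine: "I \<noteq> {}" and p: "0 < p"
    and cov: "\<And>x. x \<in> X0 \<Longrightarrow> p * card I \<le> card {i\<in>I. x \<in> S i}"
  shows "finite X \<Longrightarrow> X \<subseteq> X0 \<Longrightarrow> card X * (1 - p) ^ s < 1 \<Longrightarrow>
           \<exists>F\<subseteq>I. X \<subseteq> (\<Union>i\<in>F. S i) \<and> card F \<le> s"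
proof (induction s arbitrary: X)
  case 0
  then have "card X = 0" by simp
  then have "X = {}" using 0 by simp
  then show ?case by (intro exI[of _ "{}"]) auto
next
  case (Suc s)
  show ?case
  proof (cases "X = {}")
    case True then show ?thesis by (intro exI[of _ "{}"]) auto
  next
    case False
    then obtain x0 where x0: "x0 \<in> X" by blast
    have p1: "p \<le> 1"
    proof -
      have h1: "p * card I \<le> card {i\<in>I. x0 \<in> S i}" using cov x0 Suc.prems(2) by blast
      have c1: "card {i\<in>I. x0 \<in> S i} \<le> card I" by (rule card_mono[OF fI]) auto
      have h2: "p * real (card I) \<le> 1 * real (card I)" using h1 c1 by linarith
      have cI: "0 < real (card I)" using Ine fI by (simp add: card_gt_0_iff)
      show ?thesis using mult_right_le_imp_le[OF h2 cI] .
    qed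
    have sw: "(\<Sum>i\<in>I. real (card (X \<inter> S i))) = (\<Sum>x\<in>X. real (card {i\<in>I. x \<in> S i}))"
    proof -
      have e1: "real (card (X \<inter> S i)) = (\<Sum>x\<in>X. of_bool (x \<in> S i))" for i
        using Suc.prems(1) by simp
      have e2: "(\<Sum>i\<in>I. of_bool (x \<in> S i)) = real (card {i\<in>I. x \<in> S i})" for x
      proof -
        have "{i\<in>I. x \<in> S i} = I \<inter> {i. x \<in> S i}" by blast
        then show ?thesis using fI by simp
      qed
      have "(\<Sum>i\<in>I. real (card (X \<inter> S i))) = (\<Sum>i\<in>I. \<Sum>x\<in>X. of_bool (x \<in> S i))"
        using e1 by simp
      also have "\<dots> = (\<Sum>x\<in>X. \<Sum>i\<in>I. of_bool (x \<in> S i))" by (rule sum.swap)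
      also have "\<dots> = (\<Sum>x\<in>X. real (card {i\<in>I. x \<in> S i}))"
        using e2 by simp
      finally show ?thesis .
    qed
    have "(\<Sum>x\<in>X. p * card I) \<le> (\<Sum>x\<in>X. real (card {i\<in>I. x \<in> S i}))"
      using cov Suc.prems(2) by (intro sum_mono) auto
    then have big: "real (card X) * (p * card I) \<le> (\<Sum>i\<in>I. real (card (X \<inter> S i)))"
      using sw by simp
    obtain i where i: "i \<in> I" "p * card X \<le> card (X \<inter> S i)"
    proof (rule ccontr)
      assume "\<not> thesis"
      then have "\<forall>i\<in>I. real (card (X \<inter> S i)) < p * card X" using that by force
      then have "(\<Sum>i\<in>I. real (card (X \<inter> S i))) < (\<Sum>i\<in>I. p * card X)"
        using fI Ine by (intro sum_strict_mono) auto
      then show False using big by (simp add: algebra_simps)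
    qed
    define X' where "X' = X - S i"
    have fX': "finite X'" using Suc.prems(1) X'_def by simp
    have cX': "real (card X') = real (card X) - real (card (X \<inter> S i))"
    proof -
      have "X' = X - (X \<inter> S i)" unfolding X'_def by blast
      then have "card X' = card X - card (X \<inter> S i)"
        using Suc.prems(1) by (simp add: card_Diff_subset)
      moreover have "card (X \<inter> S i) \<le> card X" using Suc.prems(1) by (simp add: card_mono)
      ultimately show ?thesis by (simp add: of_nat_diff)
    qed
    have dd: "(1 - p) * real (card X) = real (card X) - p * real (card X)" by (simp add: left_diff_distrib)
    have "real (card X') \<le> (1 - p) * card X" using cX' i(2) dd by linarith
    then have "card X' * (1 - p) ^ s \<le> (1 - p) * card X * (1 - p) ^ s"
      using p1 by (intro mult_right_mono) auto
    also have "\<dots> = card X * (1 - p) ^ Suc s" by simp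
    finally have "card X' * (1 - p) ^ s < 1" using Suc.prems(3) by linarith
    then obtain F where F: "F \<subseteq> I" "X' \<subseteq> (\<Union>i\<in>F. S i)" "card F \<le> s"
      using Suc.IH[OF fX'] Suc.prems(2) X'_def by blast
    have "X \<subseteq> (\<Union>i\<in>insert i F. S i)" using F(2) X'_def by auto
    moreover have "card (insert i F) \<le> Suc s"
    proof -
      have "finite F" using F(1) fI finite_subset by blast
      then have "card (insert i F) \<le> Suc (card F)" by (simp add: card_insert_if)
      then show ?thesis using F(3) by simp
    qed
    moreover have "insert i F \<subseteq> I" using F(1) i(1) by blast
    ultimately show ?thesis by (intro exI[of _ "insert i F"]) simp
  qed
qed

lemma pow_half:
  fixes p :: real
  assumes "0 < p" "p \<le> 1" "1 \<le> p * n"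
  shows "(1 - p) ^ n \<le> 1 / 2"
proof -
  have "(1 - p) ^ n \<le> exp (- p) ^ n"
    using assms exp_ge_add_one_self[of "-p"] by (intro power_mono) auto
  also have "\<dots> = exp (- (p * n))" using exp_of_nat_mult[of n "-p"] by (simp add: mult.commute)
  also have "\<dots> \<le> exp (-1)" using assms by simp
  also have "\<dots> \<le> 1 / 2"
  proof -
    have "2 \<le> exp (1::real)" using exp_ge_add_one_self[of 1] by simp
    then show ?thesis by (simp add: exp_minus field_simps)
  qed
  finally show ?thesis .
qed

definition blk :: "('n \<Rightarrow> nat) \<Rightarrow> nat \<Rightarrow> ('n \<Rightarrow> bool list) \<Rightarrow> ('n \<Rightarrow> bool list)" where
  "blk t l x = (\<lambda>j. take (t j) (drop (l * t j) (x j)))"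

lemma blk_in:
  assumes "x \<in> msg_tuples (\<lambda>j. k * t j)" "l < k"
  shows "blk t l x \<in> msg_tuples t"
proof -
  have "t j \<le> k * t j - l * t j" for j
  proof -
    have "Suc l \<le> k" using assms(2) by simp
    then have "Suc l * t j \<le> k * t j" by (rule mult_right_mono) simp
    then show ?thesis by simp
  qed
  then show ?thesis using assms(1) unfolding msg_tuples_def blk_def by (simp add: min_absorb1)
qed

lemma blocks_eq:
  assumes "length xs = k * n" "length ys = k * n"
    and "\<forall>l<k. take n (drop (l * n) xs) = take n (drop (l * n) ys)"
  shows "xs = ys"
proof (rule nth_equalityI)
  show "length xs = length ys" using assms by simp
  fix p assume "p < length xs"
  then have pk: "p < k * n" using assms by simp
  then have n0: "0 < n" by (cases n) auto
  define l where "l = p div n"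
  define q where "q = p mod n"
  have lk: "l < k" using pk n0 unfolding l_def by (simp add: div_less_iff_less_mult mult.commute)
  have q: "q < n" using n0 q_def by simp
  have pe: "p = l * n + q" unfolding l_def q_def by simp
  have ln: "l * n \<le> k * n" using lk by simp
  have "take n (drop (l * n) xs) ! q = xs ! p"
    using q pe pk assms(1) ln by (simp add: nth_take nth_drop)
  moreover have "take n (drop (l * n) ys) ! q = ys ! p"
    using q pe pk assms(2) ln by (simp add: nth_take nth_drop)
  ultimately show "xs ! p = ys ! p" using assms(3) lk by metis
qed

lemma blk_eq:
  assumes "x \<in> msg_tuples (\<lambda>j. k * t j)" "y \<in> msg_tuples (\<lambda>j. k * t j)"
    and "\<forall>l<k. blk t l x j = blk t l y j"
  shows "x j = y j"
  using assms blocks_eq[of "x j" k "t j" "y j"] unfolding msg_tuples_def blk_def by auto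




lemma cut_code:
  fixes A :: "'n::finite \<Rightarrow> 'n set" and U :: "'n set"
  assumes closed: "\<forall>u\<in>U. A u \<subseteq> U" and code: "index_code_exists A t r"
  shows "\<exists>c. \<forall>n. index_code_exists (\<lambda>j. if j \<in> U then A j else A j - U) (\<lambda>j. 2^n * t j) (r * 2^n + n + c)"
proof -
  define B where "B = (\<lambda>j. if j \<in> U then A j else A j - U)"
  obtain \<phi> \<psi> where code': "is_index_code A t r \<phi> \<psi>" using code unfolding index_code_exists_def by blast
  define M where "M = msg_tuples t"
  have good: "good_col A t \<phi>" and cardC: "card (\<phi> ` M) \<le> 2 ^ r"
    using code_good[OF code'] M_def by auto
  define C where "C = \<phi> ` M"
  have gd: "\<And>x y j. x \<in> M \<Longrightarrow> y \<in> M \<Longrightarrow> \<phi> x = \<phi> y \<Longrightarrow> (\<forall>i\<in>A j. x i = y i) \<Longrightarrow> x j = y j"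
    using good unfolding good_col_def M_def by blast
  have finM: "finite M" unfolding M_def by (rule finite_msg_tuples)
  have finC: "finite C" using finM C_def by simp
  have zero_in: "(\<lambda>j. replicate (t j) False) \<in> M" unfolding M_def msg_tuples_def by simp
  define fib where "fib a = {x \<in> M. restrict x U = a}" for a
  define f where "f x = card (\<phi> ` fib (restrict x U))" for x
  define m where "m = Min (f ` M)"
  have hm: "\<forall>x\<in>M. m \<le> f x" unfolding m_def using finM by simp
  have "m \<in> f ` M" unfolding m_def using finM zero_in by (intro Min_in) auto
  then obtain z where z: "z \<in> M" "f z = m" by auto
  have m1: "1 \<le> m"
  proof -
    have "\<phi> z \<in> \<phi> ` fib (restrict z U)" using z unfolding fib_def by auto
    moreover have "finite (\<phi> ` fib (restrict z U))" using finM unfolding fib_def by simp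
    ultimately have "0 < f z" unfolding f_def by (simp add: card_gt_0_iff) blast
    then show ?thesis using z by simp
  qed
  have mC: "m \<le> card C"
  proof -
    have "\<phi> ` fib (restrict z U) \<subseteq> C" unfolding C_def fib_def by auto
    then show ?thesis using z f_def card_mono[OF finC] by metis
  qed
  have C1: "1 \<le> card C" using m1 mC by simp
  define MU where "MU = (\<lambda>x. restrict x U) ` M"
  define N where "N = card MU"
  have finMU: "finite MU" unfolding MU_def using finM by simp
  define S where "S c = {restrict x U | x. x \<in> M \<and> \<phi> x = c}" for c
  have cov1: "m \<le> card {c\<in>C. a \<in> S c}" if aMU: "a \<in> MU" for a
  proof -
    obtain x where x: "x \<in> M" "a = restrict x U" using aMU MU_def by blast
    have "\<phi> ` fib a \<subseteq> {c\<in>C. a \<in> S c}" unfolding fib_def S_def C_def by auto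
    then have "card (\<phi> ` fib a) \<le> card {c\<in>C. a \<in> S c}" using finC by (intro card_mono) auto
    then show ?thesis using hm x unfolding f_def by force
  qed
  define mg where "mg x = (\<lambda>j. if j \<in> U then z j else x j)" for x :: "'n \<Rightarrow> bool list"
  have mgM: "mg x \<in> M" if "x \<in> M" for x
    using that z(1) unfolding mg_def M_def msg_tuples_def by auto
  have mgU: "restrict (mg x) U = restrict z U" for x
    unfolding mg_def by (auto simp: restrict_def)
  define colW where "colW x = \<phi> (mg x)" for x
  have colW_sub: "colW ` M \<subseteq> \<phi> ` fib (restrict z U)"
    unfolding colW_def fib_def using mgM mgU by auto
  have cardW: "card (colW ` M) \<le> m"
  proof -
    have "finite (\<phi> ` fib (restrict z U))" using finM unfolding fib_def by simp
    then show ?thesis using colW_sub z f_def card_mono by metis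
  qed
  have finW: "finite (colW ` M)" using finM by simp
  show ?thesis unfolding B_def[symmetric]
  proof (intro exI allI)
    fix n :: nat
    define k :: nat where "k = 2 ^ n"
    define I where "I = PiE {..<k} (\<lambda>_. C)"
    define X0 where "X0 = PiE {..<k} (\<lambda>_. MU)"
    define SS where "SS cc = {\<xi>. \<forall>l<k. \<xi> l \<in> S (cc l)}" for cc
    have finI: "finite I" unfolding I_def using finC by (simp add: finite_PiE)
    have cardI: "card I = card C ^ k" unfolding I_def using card_PiE[of "{..<k}" "\<lambda>_. C"] by simp
    have Ine: "I \<noteq> {}" unfolding I_def using C1 by (auto simp: PiE_eq_empty_iff)
    have finX0: "finite X0" unfolding X0_def using finMU by (simp add: finite_PiE)
    have cardX0: "card X0 = N ^ k" unfolding X0_def N_def using card_PiE[of "{..<k}" "\<lambda>_. MU"] by simp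
    have cov: "m ^ k \<le> card {cc\<in>I. \<xi> \<in> SS cc}" if "\<xi> \<in> X0" for \<xi>
    proof -
      have eq: "{cc\<in>I. \<xi> \<in> SS cc} = PiE {..<k} (\<lambda>l. {c\<in>C. \<xi> l \<in> S c})"
        unfolding I_def SS_def by (rule set_eqI) (simp add: PiE_iff, blast)
      have "card {cc\<in>I. \<xi> \<in> SS cc} = (\<Prod>l<k. card {c\<in>C. \<xi> l \<in> S c})"
        unfolding eq by (simp add: card_PiE)
      moreover have "(\<Prod>l<k. m) \<le> (\<Prod>l<k. card {c\<in>C. \<xi> l \<in> S c})"
      proof (rule prod_mono)
        fix l assume l: "l \<in> {..<k}"
        have "\<xi> l \<in> MU" using PiE_mem[OF that[unfolded X0_def] l] .
        then show "0 \<le> m \<and> m \<le> card {c\<in>C. \<xi> l \<in> S c}" using cov1 by blast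
      qed
      ultimately show ?thesis by simp
    qed
    define p :: real where "p = real (m ^ k) / real (card C ^ k)"
    have Cpos: "0 < card C ^ k" using C1 by simp
    have mpos: "0 < m ^ k" using m1 by simp
    have ppos: "0 < p" unfolding p_def using Cpos mpos by simp
    have p1: "p \<le> 1" unfolding p_def using mC Cpos by (simp add: power_mono)
    have pI: "p * card I = m ^ k" unfolding p_def cardI using Cpos by simp
    define nn where "nn = card C ^ k div m ^ k + 1"
    have nn_ge: "card C ^ k < m ^ k * nn"
    proof -
      have e1: "card C ^ k = m ^ k * (card C ^ k div m ^ k) + card C ^ k mod m ^ k" by simp
      have "card C ^ k mod m ^ k < m ^ k" using mpos by simp
      moreover have "m ^ k * nn = m ^ k * (card C ^ k div m ^ k) + m ^ k" by (simp add: nn_def)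
      ultimately show ?thesis using e1 by linarith
    qed
    have nn_le: "nn * m ^ k \<le> card C ^ k + m ^ k"
      unfolding nn_def by (simp add: algebra_simps)
    have pnn: "1 \<le> p * nn"
    proof -
      have "real (card C ^ k) \<le> real (m ^ k) * real nn" using nn_ge
        by (metis less_imp_le of_nat_le_iff of_nat_mult)
      then show ?thesis unfolding p_def using Cpos by (simp add: field_simps)
    qed
    define s where "s = (k * N + 1) * nn"
    have half: "(1 - p) ^ nn \<le> 1 / 2" by (rule pow_half[OF ppos p1 pnn])
    have "(1 - p) ^ s = ((1 - p) ^ nn) ^ (k * N + 1)" unfolding s_def
      by (metis power_mult mult.commute)
    also have "\<dots> \<le> (1 / 2) ^ (k * N + 1)" using half p1 by (intro power_mono) auto
    finally have ps: "(1 - p) ^ s \<le> (1 / 2) ^ (k * N + 1)" .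
    have NN: "N ^ k \<le> (2::nat) ^ (k * N)"
    proof -
      have "N ^ k \<le> (2 ^ N) ^ k" using less_exp[of N] by (intro power_mono) auto
      then show ?thesis by (simp add: power_mult[symmetric] mult.commute)
    qed
    have "real (card X0) * (1 - p) ^ s \<le> real (N ^ k) * (1 / 2) ^ (k * N + 1)"
      unfolding cardX0 using ps by (intro mult_left_mono) auto
    also have "\<dots> \<le> real (2 ^ (k * N)) * (1 / 2) ^ (k * N + 1)"
      using NN by (intro mult_right_mono) (simp_all only: of_nat_le_iff, simp)
    also have "\<dots> = 1 / 2" by (simp add: power_add field_simps)
    finally have small: "real (card X0) * (1 - p) ^ s < 1" by simp
    obtain F where F: "F \<subseteq> I" "X0 \<subseteq> (\<Union>cc\<in>F. SS cc)" "card F \<le> s"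
      using greedy_cover[OF finI Ine ppos, of X0 SS, OF _ finX0 subset_refl small] cov pI by auto
    have finF: "finite F" using F(1) finI finite_subset by blast
    define M' where "M' = msg_tuples (\<lambda>j. k * t j)"
    define \<xi> where "\<xi> x = (\<lambda>l\<in>{..<k}. restrict (blk t l x) U)" for x
    have blkM: "blk t l x \<in> M" if "x \<in> M'" "l < k" for x l
      using blk_in[of x k t l] that unfolding M'_def M_def by simp
    have \<xi>X0: "\<xi> x \<in> X0" if "x \<in> M'" for x
      unfolding \<xi>_def X0_def MU_def restrict_PiE_iff using blkM[OF that] by blast
    have exF: "\<exists>cc. cc \<in> F \<and> \<xi> x \<in> SS cc" if "x \<in> M'" for x
      using F(2) \<xi>X0[OF that] by blast
    define col where "col x = (SOME cc. cc \<in> F \<and> \<xi> x \<in> SS cc, \<lambda>l\<in>{..<k}. colW (blk t l x))" for x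
    have colF: "fst (col x) \<in> F \<and> \<xi> x \<in> SS (fst (col x))" if "x \<in> M'" for x
      unfolding col_def using someI_ex[OF exF[OF that]] by simp
    have img: "col ` M' \<subseteq> F \<times> PiE {..<k} (\<lambda>_. colW ` M)"
    proof
      fix y assume "y \<in> col ` M'"
      then obtain x where x: "x \<in> M'" "y = col x" by blast
      have "fst y \<in> F" using colF[OF x(1)] x(2) by simp
      moreover have "snd y \<in> PiE {..<k} (\<lambda>_. colW ` M)"
      proof -
        have "snd y = (\<lambda>l\<in>{..<k}. colW (blk t l x))" using x(2) unfolding col_def by simp
        moreover have "(\<lambda>l\<in>{..<k}. colW (blk t l x)) \<in> PiE {..<k} (\<lambda>_. colW ` M)"
          unfolding restrict_PiE_iff using blkM x(1) by blast
        ultimately show ?thesis by simp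
      qed
      ultimately show "y \<in> F \<times> PiE {..<k} (\<lambda>_. colW ` M)" by (cases y) auto
    qed
    have card_img: "card (col ` M') \<le> card F * m ^ k"
    proof -
      have "card (col ` M') \<le> card (F \<times> PiE {..<k} (\<lambda>_. colW ` M))"
        using img finF finW by (intro card_mono) (auto simp: finite_PiE)
      also have "\<dots> = card F * card (colW ` M) ^ k"
        by (simp add: card_cartesian_product card_PiE)
      also have "\<dots> \<le> card F * m ^ k" using cardW by (intro mult_left_mono power_mono) auto
      finally show ?thesis .
    qed
    have "card F * m ^ k \<le> s * m ^ k" using F(3) by simp
    also have "\<dots> = (k * N + 1) * (nn * m ^ k)" unfolding s_def by (simp only: mult.assoc)
    also have "\<dots> \<le> (k * N + 1) * (2 * card C ^ k)"
    proof -
      have "m ^ k \<le> card C ^ k" using mC by (simp add: power_mono)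
      then show ?thesis using nn_le by (intro mult_left_mono) auto
    qed
    also have "\<dots> \<le> 2 ^ (n + N + 1) * (2 * 2 ^ (r * 2 ^ n))"
    proof (rule mult_mono)
      have h: "N + 1 \<le> 2 ^ N" using Suc_leI[OF less_exp[of N]] by simp
      have k1: "1 \<le> k" unfolding k_def by simp
      have "k*N+1 \<le> k*(N+1)" using k1 by simp
      also have "\<dots> \<le> k*2^N" by (rule mult_left_mono[OF h]) simp
      also have "\<dots> = 2^(n+N)" unfolding k_def by (simp add: power_add)
      also have "\<dots> \<le> 2^(n+N+1)" by simp
      finally show "k * N + 1 \<le> 2 ^ (n + N + 1)" .
      have "card C ^ k \<le> (2 ^ r) ^ k" using cardC C_def by (simp add: power_mono)
      then show "2 * card C ^ k \<le> 2 * 2 ^ (r * 2 ^ n)" unfolding k_def by (simp add: power_mult)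
    qed auto
    also have "\<dots> = 2 ^ (r * 2 ^ n + n + (N + 2))" by (simp add: power_add mult_ac)
    finally have cardOK: "card (col ` M') \<le> 2 ^ (r * 2 ^ n + n + (N + 2))" using card_img by linarith
    have goodB: "good_col B (\<lambda>j. 2 ^ n * t j) col"
      unfolding good_col_def
    proof (intro ballI impI allI)
      fix x y j assume x: "x \<in> msg_tuples (\<lambda>j. 2 ^ n * t j)" and y: "y \<in> msg_tuples (\<lambda>j. 2 ^ n * t j)"
        and e: "col x = col y" and ag: "\<forall>i\<in>B j. x i = y i"
      have x': "x \<in> M'" using x by (simp add: M'_def k_def)
      have y': "y \<in> M'" using y by (simp add: M'_def k_def)
      have "blk t l x j = blk t l y j" if l: "l < k" for l
      proof -
        define bx where "bx = blk t l x"
        define "by" where "by = blk t l y"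
        have bxM: "bx \<in> M" unfolding bx_def by (rule blkM[OF x' l])
        have byM: "by \<in> M" unfolding by_def by (rule blkM[OF y' l])
        have bag: "\<forall>i\<in>B j. bx i = by i" using ag unfolding bx_def by_def blk_def by simp
        show ?thesis
        proof (cases "j \<in> U")
          case True
          have Bj: "B j = A j" using True B_def by simp
          have AjU: "A j \<subseteq> U" using True closed by blast
          have fe: "fst (col x) = fst (col y)" using e by simp
          have "\<xi> x l \<in> S (fst (col x) l)" using colF[OF x'] l unfolding SS_def by blast
          then obtain x1 where x1: "x1 \<in> M" "\<phi> x1 = fst (col x) l" "restrict x1 U = restrict bx U"
            unfolding S_def \<xi>_def bx_def using l by auto
          have "\<xi> y l \<in> S (fst (col y) l)" using colF[OF y'] l unfolding SS_def by blast
          then obtain y1 where y1: "y1 \<in> M" "\<phi> y1 = fst (col y) l" "restrict y1 U = restrict by U"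
            unfolding S_def \<xi>_def by_def using l by auto
          have "\<forall>i\<in>U. x1 i = bx i" using x1(3) restrict_eq_iff by blast
          moreover have "\<forall>i\<in>U. y1 i = by i" using y1(3) restrict_eq_iff by blast
          ultimately have agA: "\<forall>i\<in>A j. x1 i = y1 i" using bag Bj AjU by auto
          have "\<phi> x1 = \<phi> y1" using x1(2) y1(2) fe by simp
          then have "x1 j = y1 j" using gd[OF x1(1) y1(1) _ agA] by blast
          moreover have "x1 j = bx j" using x1(3) True restrict_eq_iff by blast
          moreover have "y1 j = by j" using y1(3) True restrict_eq_iff by blast
          ultimately show ?thesis unfolding bx_def by_def by simp
        next
          case False
          have Bj: "B j = A j - U" using False B_def by simp
          have "snd (col x) l = snd (col y) l" using e by simp
          then have ce: "\<phi> (mg bx) = \<phi> (mg by)" using l unfolding col_def colW_def bx_def by_def by simp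
          have "\<forall>i\<in>A j. mg bx i = mg by i" using bag Bj unfolding mg_def by auto
          then have "mg bx j = mg by j" using gd[OF mgM[OF bxM] mgM[OF byM] ce] by blast
          then show ?thesis using False unfolding mg_def bx_def by_def by simp
        qed
      qed
      then show "x j = y j" using blk_eq[OF x' [unfolded M'_def] y'[unfolded M'_def]] by blast
    qed
    show "index_code_exists B (\<lambda>j. 2 ^ n * t j) (r * 2 ^ n + n + (N + 2))"
    proof (rule col_code[OF goodB])
      have M'eq: "M' = msg_tuples (\<lambda>j. 2 ^ n * t j)" unfolding M'_def k_def by (rule refl)
      show "card (col ` msg_tuples (\<lambda>j. 2 ^ n * t j)) \<le> 2 ^ (r * 2 ^ n + n + (N + 2))"
        using cardOK unfolding M'eq .
    qed
  qed
qed




lemma lim_aux: "(\<lambda>n. (real n + real c) / 2 ^ n) \<longlonglongrightarrow> 0"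
proof -
  have a: "(\<lambda>n. real n / (2::real) ^ n) \<longlonglongrightarrow> 0" using lim_n_over_pown[of "2::real"] by simp
  have b: "(\<lambda>n. real c / (2::real) ^ n) \<longlonglongrightarrow> 0" by (rule LIMSEQ_divide_realpow_zero) simp
  have "(\<lambda>n. real n / (2::real) ^ n + real c / 2 ^ n) \<longlonglongrightarrow> 0 + 0" by (rule tendsto_add[OF a b])
  then show ?thesis by (simp add: add_divide_distrib)
qed

lemma q_lim:
  assumes r: "0 < r"
  shows "(\<lambda>n. real (r * 2 ^ n) / real (r * 2 ^ n + n + c)) \<longlonglongrightarrow> 1"
proof -
  define d where "d n = (real n + real c) / real (r * 2 ^ n + n + c)" for n
  have eq: "real (r * 2 ^ n) / real (r * 2 ^ n + n + c) = 1 - d n" for n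
  proof -
    have pos0: "(0::nat) < r * 2 ^ n + n + c" using r by simp
      have pos: "0 < real (r * 2 ^ n + n + c)" using of_nat_0_less_iff[THEN iffD2, OF pos0] .
    show ?thesis unfolding d_def using pos by (simp add: field_simps)
  qed
  have "d \<longlonglongrightarrow> 0"
  proof (rule Lim_null_comparison[OF _ lim_aux[of c]])
    show "\<forall>\<^sub>F n in sequentially. norm (d n) \<le> (real n + real c) / 2 ^ n"
    proof (intro always_eventually allI)
      fix n
      have le: "(2::real) ^ n \<le> real (r * 2 ^ n + n + c)"
      proof -
        have "(2::nat) ^ n \<le> r * 2 ^ n" using r by simp
        then have "(2::nat) ^ n \<le> r * 2 ^ n + n + c" by linarith
        then show ?thesis by (metis of_nat_le_iff of_nat_numeral of_nat_power)
      qed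
      have pos0: "(0::nat) < r * 2 ^ n + n + c" using r by simp
      have pos: "0 < real (r * 2 ^ n + n + c)" using of_nat_0_less_iff[THEN iffD2, OF pos0] .
      have "d n \<ge> 0" unfolding d_def by simp
      then have "norm (d n) = d n" by simp
      also have "\<dots> \<le> (real n + real c) / 2 ^ n" unfolding d_def
        by (rule divide_left_mono[OF le]) (simp, rule mult_pos_pos[OF pos], simp)
      finally show "norm (d n) \<le> (real n + real c) / 2 ^ n" .
    qed
  qed
  then have "(\<lambda>n. 1 - d n) \<longlonglongrightarrow> 1 - 0" by (intro tendsto_diff tendsto_const)
  then show ?thesis using eq by simp
qed

lemma cut_ach:
  fixes A :: "'n::finite \<Rightarrow> 'n set"
  assumes closed: "\<forall>u\<in>U. A u \<subseteq> U" and ach: "achievable A R"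
  shows "R \<in> closure {R. achievable (\<lambda>j. if j \<in> U then A j else A j - U) R}"
proof -
  define B where "B = (\<lambda>j. if j \<in> U then A j else A j - U)"
  obtain t r where r: "0 < r" and code: "index_code_exists A t r"
    and le: "\<forall>j. R $ j \<le> real (t j) / real r" and nn: "\<forall>j. 0 \<le> R $ j"
    using ach unfolding achievable_def by blast
  obtain c where c: "\<forall>n. index_code_exists B (\<lambda>j. 2^n * t j) (r * 2^n + n + c)"
    using cut_code[OF closed code] unfolding B_def by blast
  define q where "q n = real (r * 2 ^ n) / real (r * 2 ^ n + n + c)" for n
  have qnn: "0 \<le> q n" for n unfolding q_def by simp
  have achn: "achievable B (q n *\<^sub>R R)" for n
    unfolding achievable_def
  proof (intro conjI allI exI)
    fix j
    show "0 \<le> (q n *\<^sub>R R) $ j" using qnn nn by simp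
    show "0 < r * 2 ^ n + n + c" using r by simp
    show "index_code_exists B (\<lambda>j. 2^n * t j) (r * 2^n + n + c)" using c by blast
    have "(q n *\<^sub>R R) $ j = q n * R $ j" by simp
    also have "\<dots> \<le> q n * (real (t j) / real r)" using le qnn by (intro mult_left_mono) auto
    also have "\<dots> = real (2 ^ n * t j) / real (r * 2 ^ n + n + c)"
    proof -
      have pos0: "(0::nat) < r * 2 ^ n + n + c" using r by simp
      have pos: "0 < real (r * 2 ^ n + n + c)" using of_nat_0_less_iff[THEN iffD2, OF pos0] .
      show ?thesis unfolding q_def using r pos by (simp add: field_simps)
    qed
    finally show "(q n *\<^sub>R R) $ j \<le> real (2 ^ n * t j) / real (r * 2 ^ n + n + c)" .
  qed
  have "(\<lambda>n. q n *\<^sub>R R) \<longlonglongrightarrow> 1 *\<^sub>R R"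
    by (intro tendsto_scaleR tendsto_const) (use q_lim[OF r, of c] in \<open>simp add: q_def\<close>)
  then have "(\<lambda>n. q n *\<^sub>R R) \<longlonglongrightarrow> R" by simp
  moreover have "\<forall>n. (q n *\<^sub>R R) \<in> {R. achievable B R}" using achn by simp
  ultimately show ?thesis unfolding B_def[symmetric] closure_sequential
    by (intro exI[of _ "\<lambda>n. q n *\<^sub>R R"] conjI) auto
qed

lemma cut_cap:
  fixes A :: "'n::finite \<Rightarrow> 'n set"
  assumes closed: "\<forall>u\<in>U. A u \<subseteq> U"
  shows "capacity_region A \<subseteq> capacity_region (\<lambda>j. if j \<in> U then A j else A j - U)"
proof -
  have "{R. achievable A R} \<subseteq> closure {R. achievable (\<lambda>j. if j \<in> U then A j else A j - U) R}"
    using cut_ach[OF closed] by blast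
  then show ?thesis unfolding capacity_region_def
    by (rule closure_minimal) simp
qed




lemma finite_side_graph: "finite (side_graph (A :: 'n::finite \<Rightarrow> 'n set))"
  by (rule finite_subset[OF subset_UNIV]) simp

lemma cap_prune_ind:
  fixes A :: "'n::finite \<Rightarrow> 'n set"
  shows "card (side_graph A) = N \<Longrightarrow> capacity_region (prune_acyclic_edges A) = capacity_region A"
proof (induction N arbitrary: A rule: less_induct)
  case (less N)
  define E where "E = side_graph A"
  have E_iff: "(a, b) \<in> E \<longleftrightarrow> a \<in> A b" for a b unfolding E_def side_graph_def by simp
  show ?case
  proof (cases "\<forall>i j. i \<in> A j \<longrightarrow> (j, i) \<in> E\<^sup>*")
    case True
    have "prune_acyclic_edges A = A"
    proof
      fix j show "prune_acyclic_edges A j = A j"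
        unfolding prune_acyclic_edges_def edge_on_cycle_def E_def[symmetric] using True E_iff by blast
    qed
    then show ?thesis by simp
  next
    case False
    then obtain i j where ij: "i \<in> A j" "(j, i) \<notin> E\<^sup>*" by blast
    define W where "W = {w. (j, w) \<in> E\<^sup>*}"
    define U where "U = - W"
    define B where "B = (\<lambda>k. if k \<in> U then A k else A k - U)"
    have closed: "\<forall>u\<in>U. A u \<subseteq> U"
    proof (intro ballI subsetI)
      fix u v assume u: "u \<in> U" and v: "v \<in> A u"
      show "v \<in> U"
      proof (rule ccontr)
        assume "v \<notin> U"
        then have "(j, v) \<in> E\<^sup>*" unfolding U_def W_def by simp
        moreover have "(v, u) \<in> E" using v E_iff by simp
        ultimately have "(j, u) \<in> E\<^sup>*" by (rule rtrancl_into_rtrancl)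
        then show False using u unfolding U_def W_def by simp
      qed
    qed
    have BA: "\<forall>k. B k \<subseteq> A k" unfolding B_def by auto
    have iU: "i \<in> U" using ij(2) unfolding U_def W_def by simp
    have jW: "j \<notin> U" unfolding U_def W_def by simp
    have EB_sub: "side_graph B \<subseteq> E" using BA unfolding side_graph_def E_def by auto
    have notB: "(i, j) \<notin> side_graph B" using iU jW unfolding side_graph_def B_def by simp
    have "(i, j) \<in> E" using ij(1) E_iff by simp
    then have psub: "side_graph B \<subset> E" using EB_sub notB by blast
    have lessN: "card (side_graph B) < N"
      using psubset_card_mono[OF _ psub] finite_side_graph less.prems E_def by metis
    have IH: "capacity_region (prune_acyclic_edges B) = capacity_region B"
      using less.IH[OF lessN] by blast
    have capAB: "capacity_region B = capacity_region A"
      using cap_mono[OF BA] cut_cap[OF closed] unfolding B_def by blast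
    have EB_iff: "(a, b) \<in> side_graph B \<longleftrightarrow> a \<in> B b" for a b unfolding side_graph_def by simp
    have pr: "prune_acyclic_edges B = prune_acyclic_edges A"
    proof
      fix k
      show "prune_acyclic_edges B k = prune_acyclic_edges A k"
      proof (intro set_eqI iffI)
        fix i' assume "i' \<in> prune_acyclic_edges B k"
        then have a: "i' \<in> B k" "(k, i') \<in> (side_graph B)\<^sup>*"
          unfolding prune_acyclic_edges_def edge_on_cycle_def side_graph_def by auto
        have "(k, i') \<in> E\<^sup>*" using rtrancl_mono[OF EB_sub] a(2) by blast
        moreover have "i' \<in> A k" using a(1) BA by blast
        ultimately show "i' \<in> prune_acyclic_edges A k"
          unfolding prune_acyclic_edges_def edge_on_cycle_def E_def side_graph_def by simp
      next
        fix i' assume "i' \<in> prune_acyclic_edges A k"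
        then have a: "i' \<in> A k" "(k, i') \<in> E\<^sup>*"
          unfolding prune_acyclic_edges_def edge_on_cycle_def E_def side_graph_def by auto
        have ik: "(i', k) \<in> E" using a(1) E_iff by simp
        have path: "(y, i') \<in> E\<^sup>* \<longrightarrow> (k, y) \<in> (side_graph B)\<^sup>*" if "(k, y) \<in> E\<^sup>*" for y
          using that
        proof (induction rule: rtrancl_induct)
          case base then show ?case by simp
        next
          case (step y z)
          show ?case
          proof
            assume zi: "(z, i') \<in> E\<^sup>*"
            have "(y, i') \<in> E\<^sup>*" using step.hyps(2) zi by (rule converse_rtrancl_into_rtrancl)
            then have ky: "(k, y) \<in> (side_graph B)\<^sup>*" using step.IH by blast
            have "y \<in> B z"
            proof (cases "z \<in> U")
              case True then show ?thesis using step.hyps(2) E_iff unfolding B_def by simp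
            next
              case False
              then have jz: "(j, z) \<in> E\<^sup>*" unfolding U_def W_def by simp
              have "(j, y) \<in> E\<^sup>*"
                using jz zi ik step.hyps(1) by (meson rtrancl_trans r_into_rtrancl)
              then have "y \<notin> U" unfolding U_def W_def by simp
              then show ?thesis using step.hyps(2) E_iff False unfolding B_def by simp
            qed
            then have "(y, z) \<in> side_graph B" using EB_iff by simp
            then show "(k, z) \<in> (side_graph B)\<^sup>*" using ky by (meson rtrancl_into_rtrancl)
          qed
        qed
        have kB: "(k, i') \<in> (side_graph B)\<^sup>*" using path[OF a(2)] by simp
        have "i' \<in> B k"
        proof (cases "k \<in> U")
          case True then show ?thesis using a(1) unfolding B_def by simp
        next
          case False
          then have jk: "(j, k) \<in> E\<^sup>*" unfolding U_def W_def by simp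
          have "(j, i') \<in> E\<^sup>*" using jk a(2) by (rule rtrancl_trans)
          then have "i' \<notin> U" unfolding U_def W_def by simp
          then show ?thesis using a(1) False unfolding B_def by simp
        qed
        then show "i' \<in> prune_acyclic_edges B k"
          using kB unfolding prune_acyclic_edges_def edge_on_cycle_def side_graph_def by simp
      qed
    qed
    show ?thesis using IH capAB pr by simp
  qed
qed

theorem mainTheorem8:
  fixes A :: "'n::finite \<Rightarrow> 'n set"
  assumes "well_formed_ic A"
  shows "capacity_region (prune_acyclic_edges A) = capacity_region A"
  using cap_prune_ind by blast


end
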